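(* On \(\mathcal F\), the Neveu–Schwarz operator \(L_1\) equals \(-D_{\mathcal F}\), where \[ D_{\mathcal F}=\sum_{n\ge1}x_n\frac{\partial}{\partial x_{n+1}}+\sum_{m\ge0}y_{m+1/2}\frac{\partial}{\partial y_{m+3/2}}. \]
   Context: \(\mathcal F=\mathbb C[x_1,x_2,\dots]\otimes\Lambda_{\mathbb C}(y_{1/2},y_{3/2},\dots)\) (identified with \(H^*(\mathrm{Fred}_0\times\mathrm{Fred}_{\mathrm{sa}}^1;\mathbb C)\), \(x_n\) and \(y_{m+1/2}\) being components of the even and odd Chern characters). Let \(\beta=\sqrt2\). For \(n>0\): \(a_{-n}=(-1)^{n-1}\frac{n!}{\beta}x_n\), \(a_n=(-1)^{n-1}\frac{\beta}{(n-1)!}\frac{\partial}{\partial x_n}\); \(a_0=0\). For \(m\ge0\): \(b_{-(m+1/2)}=(-1)^mm!\,y_{m+1/2}\), \(b_{m+1/2}=\frac{(-1)^m}{m!}\frac{\partial}{\partial y_{m+1/2}}\) (left derivative on the exterior algebra). \(L_n=\tfrac12\sum_{m\in\mathbb Z}:a_ma_{n-m}:+\tfrac14\sum_{r\in\mathbb Z+1/2}(n-2r):b_rb_{n-r}:\), where normal ordering places modes of negative index to the left of modes of positive index (with the Koszul sign when interchanging odd modes). *)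

theory Defs
  imports "HOL-Analysis.Analysis"
begin

text \<open>Model of F = C[x_1,x_2,...] (x) Lambda(y_{1/2},y_{3/2},...).
  A basis monomial is a pair (e, S): e n is the exponent of x_n (n >= 1; e 0 = 0),
  S is a finite set of indices m, standing for the exterior monomial
  y_{s_1+1/2} y_{s_2+1/2} ... with s_1 < s_2 < ... (increasing order).\<close>

type_synonym mono = "(nat \<Rightarrow> nat) \<times> nat set"
type_synonym Fel = "mono \<Rightarrow> complex"

definition valid_mono :: "mono \<Rightarrow> bool" where
  "valid_mono \<mu> = (finite {n. fst \<mu> n \<noteq> 0} \<and> fst \<mu> 0 = 0 \<and> finite (snd \<mu>))"

definition Fspace :: "Fel set" where
  "Fspace = {f. finite {\<mu>. f \<mu> \<noteq> 0} \<and> (\<forall>\<mu>. f \<mu> \<noteq> 0 \<longrightarrow> valid_mono \<mu>)}"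

definition xmul :: "nat \<Rightarrow> Fel \<Rightarrow> Fel" where
  "xmul n f = (\<lambda>(e, S). if e n > 0 then f (e(n := e n - 1), S) else 0)"

definition dx :: "nat \<Rightarrow> Fel \<Rightarrow> Fel" where
  "dx n f = (\<lambda>(e, S). of_nat (e n + 1) * f (e(n := e n + 1), S))"

text \<open>Left multiplication by y_{m+1/2}.\<close>
definition ymul :: "nat \<Rightarrow> Fel \<Rightarrow> Fel" where
  "ymul m f = (\<lambda>(e, T). if m \<in> T then (-1) ^ card {t\<in>T. t < m} * f (e, T - {m}) else 0)"

text \<open>Left derivative d/dy_{m+1/2}.\<close>
definition dy :: "nat \<Rightarrow> Fel \<Rightarrow> Fel" where
  "dy m f = (\<lambda>(e, T). if m \<notin> T then (-1) ^ card {t\<in>T. t < m} * f (e, insert m T) else 0)"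

text \<open>Bosonic modes a_k, k an integer (beta = sqrt 2).\<close>
definition amode :: "int \<Rightarrow> Fel \<Rightarrow> Fel" where
  "amode k f =
    (if k < 0 then (let n = nat (-k) in
        (\<lambda>\<mu>. (-1) ^ (n - 1) * fact n / complex_of_real (sqrt 2) * xmul n f \<mu>))
     else if k > 0 then (let n = nat k in
        (\<lambda>\<mu>. (-1) ^ (n - 1) * complex_of_real (sqrt 2) / fact (n - 1) * dx n f \<mu>))
     else (\<lambda>\<mu>. 0))"

text \<open>Fermionic modes b_r, r = j + 1/2 with j an integer.
  j >= 0: r = m + 1/2 with m = j;  j < 0: r = -(m+1/2) with m = -j-1.\<close>
definition bmode :: "int \<Rightarrow> Fel \<Rightarrow> Fel" where
  "bmode j f =
    (if j \<ge> 0 then (let m = nat j in (\<lambda>\<mu>. (-1) ^ m / fact m * dy m f \<mu>))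
     else (let m = nat (- j - 1) in (\<lambda>\<mu>. (-1) ^ m * fact m * ymul m f \<mu>)))"

definition anord :: "int \<Rightarrow> int \<Rightarrow> Fel \<Rightarrow> Fel" where
  "anord m k f = (if m > 0 \<and> k < 0 then amode k (amode m f) else amode m (amode k f))"

text \<open>b_{j+1/2} has positive index iff j >= 0; interchange of odd modes gives a sign.\<close>
definition bnord :: "int \<Rightarrow> int \<Rightarrow> Fel \<Rightarrow> Fel" where
  "bnord j k f = (if j \<ge> 0 \<and> k < 0 then (\<lambda>\<mu>. - bmode k (bmode j f) \<mu>)
                  else bmode j (bmode k f))"

text \<open>L_n = 1/2 sum_m :a_m a_{n-m}: + 1/4 sum_r (n - 2r) :b_r b_{n-r}:,
  with r = j + 1/2 and n - r = (n - j - 1) + 1/2; infinite sums taken coefficientwise.\<close>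
definition Lop :: "int \<Rightarrow> Fel \<Rightarrow> Fel" where
  "Lop n f = (\<lambda>\<mu>.
      (1/2) * (\<Sum>\<^sub>\<infinity>m::int. anord m (n - m) f \<mu>)
    + (1/4) * (\<Sum>\<^sub>\<infinity>j::int. of_int (n - 2 * j - 1) * bnord j (n - j - 1) f \<mu>))"

definition DF :: "Fel \<Rightarrow> Fel" where
  "DF f = (\<lambda>\<mu>. (\<Sum>\<^sub>\<infinity>n\<in>{1::nat..}. xmul n (dx (n + 1) f) \<mu>)
             + (\<Sum>\<^sub>\<infinity>m::nat. ymul m (dy (m + 1) f) \<mu>))"

end

theory Submission
  imports Defs
begin

lemma xmul_scale: "xmul n (\<lambda>\<mu>. c * g \<mu>) = (\<lambda>\<mu>. c * xmul n g \<mu>)"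
  by (auto simp: xmul_def fun_eq_iff)

lemma ymul_scale: "ymul n (\<lambda>\<mu>. c * g \<mu>) = (\<lambda>\<mu>. c * ymul n g \<mu>)"
  by (auto simp: ymul_def fun_eq_iff)

lemma fin_x:
  assumes "f \<in> Fspace"
  shows "finite {n. xmul n (dx (n+1) f) (e,S) \<noteq> 0}"
proof (cases "\<exists>n. xmul n (dx (n+1) f) (e,S) \<noteq> 0")
  case False then show ?thesis by simp
next
  case True
  then obtain n0 where h: "xmul n0 (dx (n0+1) f) (e,S) \<noteq> 0" by blast
  define e2 where "e2 = (e(n0 := e n0 - 1))((n0+1) := (e(n0 := e n0 - 1)) (n0+1) + 1)"
  from h have "f (e2,S) \<noteq> 0" by (auto simp: xmul_def dx_def e2_def split: if_splits)
  then have "valid_mono (e2,S)" using assms by (auto simp: Fspace_def)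
  hence "finite {i. e2 i \<noteq> 0}" by (simp add: valid_mono_def)
  moreover have "{i. e i \<noteq> 0} \<subseteq> {i. e2 i \<noteq> 0} \<union> {n0, n0+1}" by (auto simp: e2_def)
  ultimately have "finite {i. e i \<noteq> 0}" by (meson finite_subset finite_Un finite.intros)
  moreover have "{n. xmul n (dx (n+1) f) (e,S) \<noteq> 0} \<subseteq> {i. e i \<noteq> 0}"
    by (auto simp: xmul_def split: if_splits)
  ultimately show ?thesis by (rule finite_subset[rotated])
qed

lemma fin_y:
  assumes "f \<in> Fspace"
  shows "finite {m. ymul m (dy (m+1) f) (e,S) \<noteq> 0}"
proof (cases "\<exists>m. ymul m (dy (m+1) f) (e,S) \<noteq> 0")
  case False then show ?thesis by simp
next
  case True
  then obtain m0 where h: "ymul m0 (dy (m0+1) f) (e,S) \<noteq> 0" by blast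
  from h have m0: "m0 \<in> S" and "f (e, insert (m0+1) (S - {m0})) \<noteq> 0"
    by (auto simp: ymul_def dy_def split: if_splits)
  then have "valid_mono (e, insert (m0+1) (S - {m0}))" using assms by (auto simp: Fspace_def)
  hence "finite (insert (m0+1) (S - {m0}))" by (simp add: valid_mono_def)
  hence "finite S" by simp
  moreover have "{m. ymul m (dy (m+1) f) (e,S) \<noteq> 0} \<subseteq> S"
    by (auto simp: ymul_def split: if_splits)
  ultimately show ?thesis by (rule finite_subset[rotated])
qed

lemma amode_neg: "n \<ge> 1 \<Longrightarrow> amode (- int n) g = (\<lambda>\<mu>. ((-1) ^ (n - 1) * fact n / complex_of_real (sqrt 2)) * xmul n g \<mu>)"
  by (simp add: amode_def Let_def)

lemma amode_pos: "amode (int n + 1) g = (\<lambda>\<mu>. ((-1) ^ n * complex_of_real (sqrt 2) / fact n) * dx (n+1) g \<mu>)"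
proof -
  have "nat (int n + 1) = n + 1" by simp
  then show ?thesis by (simp add: amode_def Let_def)
qed

lemma bmode_pos: "bmode (int m) g = (\<lambda>\<mu>. ((-1) ^ m / fact m) * dy m g \<mu>)"
  by (simp add: bmode_def)

lemma bmode_neg: "bmode (- int m - 1) g = (\<lambda>\<mu>. ((-1) ^ m * fact m) * ymul m g \<mu>)"
proof -
  have "nat (- (- int m - 1) - 1) = m" by simp
  then show ?thesis by (simp add: bmode_def Let_def)
qed

lemma scal_a: "n \<ge> 1 \<Longrightarrow> ((-1) ^ (n - 1) * fact n / complex_of_real (sqrt 2)) * (((-1) ^ n * complex_of_real (sqrt 2) / fact n) * X) = - (X::complex)"
proof -
  assume "n \<ge> 1"
  then obtain k where n: "n = Suc k" by (cases n) auto
  have s: "complex_of_real (sqrt 2) \<noteq> 0" by simp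
  have f: "(fact n :: complex) \<noteq> 0" by simp
  have "((-1::complex) ^ (n - 1)) * (-1) ^ n = -1" by (simp add: n)
  then show ?thesis using s f by (simp add: field_simps)
qed

lemma bos_term1:
  assumes "n \<ge> 1"
  shows "anord (int n + 1) (1 - (int n + 1)) f \<mu> = - xmul n (dx (n+1) f) \<mu>"
proof -
  have "anord (int n + 1) (1 - (int n + 1)) f \<mu> = amode (- int n) (amode (int n + 1) f) \<mu>"
    using assms by (simp add: anord_def)
  also have "\<dots> = - xmul n (dx (n+1) f) \<mu>"
    using assms by (simp only: amode_neg amode_pos xmul_scale scal_a)
  finally show ?thesis .
qed

lemma bos_term2:
  assumes "n \<ge> 1"
  shows "anord (- int n) (1 - (- int n)) f \<mu> = - xmul n (dx (n+1) f) \<mu>"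
proof -
  have "anord (- int n) (1 - (- int n)) f \<mu> = amode (- int n) (amode (int n + 1) f) \<mu>"
    using assms by (simp add: anord_def add.commute)
  also have "\<dots> = - xmul n (dx (n+1) f) \<mu>"
    using assms by (simp only: amode_neg amode_pos xmul_scale scal_a)
  finally show ?thesis .
qed

lemma scal_b: "((-1) ^ m * fact m) * (((-1) ^ (m+1) / fact (m+1)) * X) = - (X::complex) / (of_nat m + 1)"
proof -
  have f: "(fact m :: complex) \<noteq> 0" "(of_nat m + 1 :: complex) \<noteq> 0" by (simp, metis add.commute of_nat_Suc of_nat_neq_0)
  have "((-1::complex) ^ m) * (-1) ^ (m+1) = -1" by (simp flip: power_add)
  have "(fact (m+1) :: complex) = (of_nat m + 1) * fact m" by simp
  then have q: "(fact m :: complex) / fact (m+1) = 1 / (of_nat m + 1)" using f by simp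
  have "((-1) ^ m * fact m) * (((-1) ^ (m+1) / fact (m+1)) * X) = (((-1::complex) ^ m) * (-1) ^ (m+1)) * ((fact m :: complex) / fact (m+1)) * X"
    by (simp add: field_simps)
  also have "\<dots> = - X / (of_nat m + 1)" unfolding q \<open>((-1::complex) ^ m) * (-1) ^ (m+1) = -1\<close> by simp
  finally show ?thesis .
qed

lemma ferm_term1:
  "of_int (1 - 2 * (int m + 1) - 1) * bnord (int m + 1) (1 - (int m + 1) - 1) f \<mu>
     = -2 * ymul m (dy (m+1) f) \<mu>"
proof -
  have "bnord (int m + 1) (1 - (int m + 1) - 1) f \<mu> = - bmode (- int m - 1) (bmode (int (m+1)) f) \<mu>"
    by (simp add: bnord_def add.commute)
  also have "\<dots> = ymul m (dy (m+1) f) \<mu> / (of_nat m + 1)"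
    by (simp only: bmode_neg bmode_pos ymul_scale scal_b) simp
  finally have e: "bnord (int m + 1) (1 - (int m + 1) - 1) f \<mu> = ymul m (dy (m+1) f) \<mu> / (of_nat m + 1)" .
  have "(of_nat m + 1 :: complex) \<noteq> 0" by (metis add.commute of_nat_Suc of_nat_neq_0)
  then show ?thesis unfolding e by (simp add: field_simps)
qed

lemma ferm_term2:
  "of_int (1 - 2 * (- int m - 1) - 1) * bnord (- int m - 1) (1 - (- int m - 1) - 1) f \<mu>
     = -2 * ymul m (dy (m+1) f) \<mu>"
proof -
  have "bnord (- int m - 1) (1 - (- int m - 1) - 1) f \<mu> = bmode (- int m - 1) (bmode (int (m+1)) f) \<mu>"
    by (simp add: bnord_def add.commute)
  also have "\<dots> = - ymul m (dy (m+1) f) \<mu> / (of_nat m + 1)"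
    by (simp only: bmode_neg bmode_pos ymul_scale scal_b)
  finally have e: "bnord (- int m - 1) (1 - (- int m - 1) - 1) f \<mu> = - ymul m (dy (m+1) f) \<mu> / (of_nat m + 1)" .
  have "(of_nat m + 1 :: complex) \<noteq> 0" by (metis add.commute of_nat_Suc of_nat_neq_0)
  then show ?thesis unfolding e by (simp add: field_simps)
qed

theorem proposition5p11:
  assumes "f \<in> Fspace"
  shows "Lop 1 f = (\<lambda>\<mu>. - DF f \<mu>)"
proof (rule ext)
  fix \<mu> :: mono
  obtain e S where mu: "\<mu> = (e,S)" by (cases \<mu>)
  define h where "h n = xmul n (dx (n+1) f) \<mu>" for n
  define k where "k m = ymul m (dy (m+1) f) \<mu>" for m
  define g where "g m = anord m (1 - m) f \<mu>" for m :: int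
  define G where "G j = of_int (1 - 2*j - 1) * bnord j (1 - j - 1) f \<mu>" for j :: int
  have L: "Lop 1 f \<mu> = 1/2 * infsum g UNIV + 1/4 * infsum G UNIV"
    unfolding Lop_def g_def G_def by simp
  have D: "DF f \<mu> = infsum h {1..} + infsum k UNIV"
    unfolding DF_def h_def k_def by simp
  define K where "K = {n. h n \<noteq> 0} \<inter> {1..}"
  define K2 where "K2 = {m. k m \<noteq> 0}"
  have fK: "finite K" using fin_x[OF assms, of e S] by (simp add: K_def h_def mu)
  have fK2: "finite K2" using fin_y[OF assms, of e S] by (simp add: K2_def k_def mu)
  have hsum: "infsum h {1..} = sum h K"
  proof -
    have "infsum h {1..} = infsum h K" by (rule infsum_cong_neutral) (auto simp: K_def)
    then show ?thesis using fK by simp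
  qed
  have ksum: "infsum k UNIV = sum k K2"
  proof -
    have "infsum k UNIV = infsum k K2" by (rule infsum_cong_neutral) (auto simp: K2_def)
    then show ?thesis using fK2 by simp
  qed
  define P where "P = (\<lambda>n. int n + 1) ` K"
  define M where "M = (\<lambda>n. - int n) ` K"
  have gP: "g (int n + 1) = - h n" if "n \<ge> 1" for n
    unfolding g_def h_def using bos_term1[OF that] by simp
  have gM: "g (- int n) = - h n" if "n \<ge> 1" for n
    unfolding g_def h_def using bos_term2[OF that] by simp
  have g0: "g m = 0" if "m \<notin> P \<union> M" for m
  proof (cases "m \<ge> 2")
    case True
    define n where "n = nat (m - 1)"
    have m: "m = int n + 1" and n1: "n \<ge> 1" using True by (auto simp: n_def)
    have "n \<notin> K" using that m by (auto simp: P_def)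
    then have "h n = 0" using n1 by (auto simp: K_def)
    then show ?thesis using gP[OF n1] m by simp
  next
    case False
    show ?thesis
    proof (cases "m \<le> -1")
      case True
      define n where "n = nat (- m)"
      have m: "m = - int n" and n1: "n \<ge> 1" using True by (auto simp: n_def)
      have "n \<notin> K" using that m by (auto simp: M_def)
      then have "h n = 0" using n1 by (auto simp: K_def)
      then show ?thesis using gM[OF n1] m by simp
    next
      case False2: False
      with False have "m = 0 \<or> m = 1" by auto
      then show ?thesis
        by (auto simp: g_def anord_def amode_def dx_def case_prod_beta)
    qed
  qed
  have fP: "finite P" "finite M" using fK by (simp_all add: P_def M_def)
  have gsum: "infsum g UNIV = sum g (P \<union> M)"
  proof -
    have "infsum g UNIV = infsum g (P \<union> M)" by (rule infsum_cong_neutral) (use g0 in auto)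
    then show ?thesis using fP by simp
  qed
  have disj: "P \<inter> M = {}" by (auto simp: P_def M_def)
  have "sum g (P \<union> M) = sum g P + sum g M" by (rule sum.union_disjoint) (use fP disj in auto)
  also have "sum g P = sum (\<lambda>n. - h n) K"
    unfolding P_def by (subst sum.reindex) (auto simp: inj_on_def K_def gP)
  also have "sum g M = sum (\<lambda>n. - h n) K"
    unfolding M_def by (subst sum.reindex) (auto simp: inj_on_def K_def gM)
  finally have gtot: "infsum g UNIV = - 2 * sum h K" using gsum by (simp add: sum_negf)
  define P2 where "P2 = (\<lambda>m. int m + 1) ` K2"
  define M2 where "M2 = (\<lambda>m. - int m - 1) ` K2"
  have GP: "G (int m + 1) = -2 * k m" for m
    unfolding G_def k_def by (rule ferm_term1)
  have GM: "G (- int m - 1) = -2 * k m" for m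
    unfolding G_def k_def by (rule ferm_term2)
  have G0: "G j = 0" if "j \<notin> P2 \<union> M2" for j
  proof (cases "j \<ge> 1")
    case True
    define m where "m = nat (j - 1)"
    have j: "j = int m + 1" using True by (auto simp: m_def)
    have "m \<notin> K2" using that j by (auto simp: P2_def)
    then have "k m = 0" by (auto simp: K2_def)
    then show ?thesis using GP[of m] j by simp
  next
    case False
    show ?thesis
    proof (cases "j \<le> -1")
      case True
      define m where "m = nat (- j - 1)"
      have j: "j = - int m - 1" using True by (auto simp: m_def)
      have "m \<notin> K2" using that j by (auto simp: M2_def)
      then have "k m = 0" by (auto simp: K2_def)
      then show ?thesis using GM[of m] j by simp
    next
      case False2: False
      with False have "j = 0" by auto
      then show ?thesis by (simp add: G_def)
    qed
  qed
  have fP2: "finite P2" "finite M2" using fK2 by (simp_all add: P2_def M2_def)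
  have Gsum: "infsum G UNIV = sum G (P2 \<union> M2)"
  proof -
    have "infsum G UNIV = infsum G (P2 \<union> M2)" by (rule infsum_cong_neutral) (use G0 in auto)
    then show ?thesis using fP2 by simp
  qed
  have disj2: "P2 \<inter> M2 = {}" by (auto simp: P2_def M2_def)
  have "sum G (P2 \<union> M2) = sum G P2 + sum G M2" by (rule sum.union_disjoint) (use fP2 disj2 in auto)
  also have "sum G P2 = sum (\<lambda>m. -2 * k m) K2"
    unfolding P2_def by (subst sum.reindex) (auto simp: inj_on_def GP)
  also have "sum G M2 = sum (\<lambda>m. -2 * k m) K2"
    unfolding M2_def by (subst sum.reindex) (auto simp: inj_on_def GM)
  finally have Gtot: "infsum G UNIV = - 4 * sum k K2" using Gsum by (simp add: sum_negf sum_distrib_left[symmetric])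
  show "Lop 1 f \<mu> = - DF f \<mu>"
    unfolding L D gtot Gtot hsum ksum by simp
qed

end
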